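(* Let $L\subset\mathbb{R}^2$ be a connected set such that for every $P\in L$ there exists $r>0$ for which $B_r(P)\cap L$ is (the image of) a regular curve. Then for any $S,Q\in L$ there exists a regular curve in $L$ having $S$ and $Q$ as its two endpoints.
   Context: A curve $\gamma:[a,b]\to\mathbb{R}^2$ is regular if $-\infty<a<b<\infty$, $\gamma(x)\ne\gamma(y)$ whenever $a\le x<y\le b$ and $(x,y)\ne(a,b)$, $\|\gamma\|_{C^2(a,b)}<\infty$, and $|\gamma'|$ is uniformly bounded away from $0$; a curve defined on an open interval $(a,b)$ is regular if its continuous extension to $[a,b]$ is regular. $B_r(P)$ denotes the open disc. *)

theory Defs
  imports "HOL-Analysis.Analysis"
begin

definition regular_curve :: "(real \<Rightarrow> real^2) \<Rightarrow> real \<Rightarrow> real \<Rightarrow> bool" where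
  "regular_curve \<gamma> a b \<longleftrightarrow>
     a < b \<and>
     continuous_on {a..b} \<gamma> \<and>
     (\<forall>x\<in>{a..b}. \<forall>y\<in>{a..b}. x < y \<and> (x, y) \<noteq> (a, b) \<longrightarrow> \<gamma> x \<noteq> \<gamma> y) \<and>
     (\<exists>\<gamma>' \<gamma>''.
        (\<forall>t\<in>{a<..<b}. (\<gamma> has_vector_derivative \<gamma>' t) (at t) \<and>
                         (\<gamma>' has_vector_derivative \<gamma>'' t) (at t)) \<and>
        continuous_on {a<..<b} \<gamma>'' \<and>
        bounded (\<gamma> ` {a<..<b}) \<and> bounded (\<gamma>' ` {a<..<b}) \<and> bounded (\<gamma>'' ` {a<..<b}) \<and>
        (\<exists>c>0. \<forall>t\<in>{a<..<b}. c \<le> norm (\<gamma>' t)))"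

end

theory Submission
  imports Defs
begin



lemma regular_restrict:
  assumes "regular_curve \<gamma> a b" "a \<le> p" "p < q" "q \<le> b"
  shows "regular_curve \<gamma> p q"
proof -
  obtain \<gamma>' \<gamma>'' c where d: "\<forall>t\<in>{a<..<b}. (\<gamma> has_vector_derivative \<gamma>' t) (at t) \<and>
                         (\<gamma>' has_vector_derivative \<gamma>'' t) (at t)"
    and c2: "continuous_on {a<..<b} \<gamma>''" and b0: "bounded (\<gamma> ` {a<..<b})" and b1: "bounded (\<gamma>' ` {a<..<b})"
    and b2: "bounded (\<gamma>'' ` {a<..<b})" and c: "c > 0" "\<forall>t\<in>{a<..<b}. c \<le> norm (\<gamma>' t)"
    using assms(1) unfolding regular_curve_def by blast
  have sub: "{p<..<q} \<subseteq> {a<..<b}" using assms by auto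
  have "continuous_on {p..q} \<gamma>"
    using assms(1) unfolding regular_curve_def by (meson assms atLeastatMost_subset_iff continuous_on_subset)
  moreover have "\<forall>x\<in>{p..q}. \<forall>y\<in>{p..q}. x < y \<and> (x, y) \<noteq> (p, q) \<longrightarrow> \<gamma> x \<noteq> \<gamma> y"
  proof (intro ballI impI)
    fix x y assume xy: "x \<in> {p..q}" "y \<in> {p..q}" "x < y \<and> (x, y) \<noteq> (p, q)"
    then have "(x,y) \<noteq> (a,b)" using assms by auto
    then show "\<gamma> x \<noteq> \<gamma> y" using assms(1) xy assms unfolding regular_curve_def by auto
  qed
  moreover have "\<exists>\<gamma>' \<gamma>''.
        (\<forall>t\<in>{p<..<q}. (\<gamma> has_vector_derivative \<gamma>' t) (at t) \<and>
                         (\<gamma>' has_vector_derivative \<gamma>'' t) (at t)) \<and>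
        continuous_on {p<..<q} \<gamma>'' \<and>
        bounded (\<gamma> ` {p<..<q}) \<and> bounded (\<gamma>' ` {p<..<q}) \<and> bounded (\<gamma>'' ` {p<..<q}) \<and>
        (\<exists>c>0. \<forall>t\<in>{p<..<q}. c \<le> norm (\<gamma>' t))"
    apply (rule exI[of _ \<gamma>'], rule exI[of _ \<gamma>''])
    using d c2 b0 b1 b2 c sub
    by (meson bounded_subset continuous_on_subset image_mono subsetD)
  ultimately show ?thesis using assms unfolding regular_curve_def by auto
qed

lemma regular_reverse:
  assumes "regular_curve \<gamma> a b"
  shows "regular_curve (\<lambda>t. \<gamma> (-t)) (-b) (-a)"
proof -
  obtain \<gamma>' \<gamma>'' c where d: "\<forall>t\<in>{a<..<b}. (\<gamma> has_vector_derivative \<gamma>' t) (at t) \<and>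
                         (\<gamma>' has_vector_derivative \<gamma>'' t) (at t)"
    and c2: "continuous_on {a<..<b} \<gamma>''" and b0: "bounded (\<gamma> ` {a<..<b})" and b1: "bounded (\<gamma>' ` {a<..<b})"
    and b2: "bounded (\<gamma>'' ` {a<..<b})" and c: "c > 0" "\<forall>t\<in>{a<..<b}. c \<le> norm (\<gamma>' t)"
    using assms(1) unfolding regular_curve_def by blast
  have img: "uminus ` {-b<..<-a} = {a<..<b}" for a b :: real
    by (force simp: image_iff intro: bexI[of _ "- _"])
  have cont: "continuous_on {a..b} \<gamma>" using assms unfolding regular_curve_def by auto
  have "continuous_on {-b..-a} (\<lambda>t. \<gamma> (-t))"
    apply (rule continuous_on_compose2[OF cont]) by (auto intro: continuous_intros)
  moreover have "\<forall>x\<in>{-b..-a}. \<forall>y\<in>{-b..-a}. x < y \<and> (x, y) \<noteq> (-b, -a) \<longrightarrow> \<gamma> (-x) \<noteq> \<gamma> (-y)"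
  proof (intro ballI impI)
    fix x y assume xy: "x \<in> {-b..-a}" "y \<in> {-b..-a}" "x < y \<and> (x, y) \<noteq> (-b, -a)"
    then have "\<gamma> (-y) \<noteq> \<gamma> (-x)" using assms unfolding regular_curve_def
      by (metis (no_types, lifting) atLeastAtMost_iff minus_equation_iff neg_le_iff_le neg_less_iff_less prod.inject)
    then show "\<gamma> (-x) \<noteq> \<gamma> (-y)" by auto
  qed
  moreover have "\<exists>g' g''.
        (\<forall>t\<in>{-b<..<-a}. ((\<lambda>t. \<gamma> (-t)) has_vector_derivative g' t) (at t) \<and>
                         (g' has_vector_derivative g'' t) (at t)) \<and>
        continuous_on {-b<..<-a} g'' \<and>
        bounded ((\<lambda>t. \<gamma> (-t)) ` {-b<..<-a}) \<and> bounded (g' ` {-b<..<-a}) \<and> bounded (g'' ` {-b<..<-a}) \<and>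
        (\<exists>c>0. \<forall>t\<in>{-b<..<-a}. c \<le> norm (g' t))"
  proof (rule exI[of _ "\<lambda>t. - \<gamma>' (-t)"], rule exI[of _ "\<lambda>t. \<gamma>'' (-t)"], intro conjI)
    show "\<forall>t\<in>{-b<..<-a}. ((\<lambda>t. \<gamma> (-t)) has_vector_derivative - \<gamma>' (-t)) (at t) \<and>
                         ((\<lambda>t. - \<gamma>' (-t)) has_vector_derivative \<gamma>'' (-t)) (at t)"
    proof
      fix t assume t: "t \<in> {-b<..<-a}"
      then have t': "-t \<in> {a<..<b}" by auto
      have 1: "((\<lambda>t. \<gamma> (-t)) has_vector_derivative (-1) *\<^sub>R \<gamma>' (-t)) (at t)"
        apply (rule vector_diff_chain_at[where f=uminus, unfolded o_def])
        using d t' by (auto intro!: derivative_eq_intros)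
      have 2: "((\<lambda>t. \<gamma>' (-t)) has_vector_derivative (-1) *\<^sub>R \<gamma>'' (-t)) (at t)"
        apply (rule vector_diff_chain_at[where f=uminus, unfolded o_def])
        using d t' by (auto intro!: derivative_eq_intros)
      show "((\<lambda>t. \<gamma> (-t)) has_vector_derivative - \<gamma>' (-t)) (at t) \<and>
                         ((\<lambda>t. - \<gamma>' (-t)) has_vector_derivative \<gamma>'' (-t)) (at t)"
        using 1 has_vector_derivative_minus[OF 2] by simp
    qed
    show "continuous_on {-b<..<-a} (\<lambda>t. \<gamma>'' (-t))"
      apply (rule continuous_on_compose2[OF c2]) by (auto intro: continuous_intros)
    show "bounded ((\<lambda>t. \<gamma> (-t)) ` {-b<..<-a})"
      using b0 by (metis (no_types, lifting) image_cong image_image img)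
    show "bounded ((\<lambda>t. - \<gamma>' (-t)) ` {-b<..<-a})"
    proof -
      have "(\<lambda>t. - \<gamma>' (-t)) ` {-b<..<-a} = uminus ` (\<gamma>' ` {a<..<b})"
        by (metis (no_types, lifting) image_cong image_image img)
      then show ?thesis using b1 bounded_uminus by simp
    qed
    show "bounded ((\<lambda>t. \<gamma>'' (-t)) ` {-b<..<-a})"
      using b2 by (metis (no_types, lifting) image_cong image_image img)
    show "\<exists>c>0. \<forall>t\<in>{-b<..<-a}. c \<le> norm (- \<gamma>' (-t))"
      using c by (intro exI[of _ c]) auto
  qed
  ultimately show ?thesis using assms unfolding regular_curve_def by auto
qed

lemma has_vector_derivative_glue:
  fixes f :: "real \<Rightarrow> 'a::real_normed_vector"
  assumes "(f has_vector_derivative D) (at x within {..x})"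
    and "(f has_vector_derivative D) (at x within {x..})"
  shows "(f has_vector_derivative D) (at x)"
proof -
  have "(f has_vector_derivative D) (at x within ({..x} \<union> {x..}))"
    using assms unfolding has_vector_derivative_def has_derivative_within
    by (simp add: Lim_within_Un)
  moreover have "{..x} \<union> {x..} = UNIV" by auto
  ultimately show ?thesis by simp
qed




lemma comp_deriv:
  fixes g :: "real \<Rightarrow> real^'n"
  shows "(g has_vector_derivative g') F \<Longrightarrow> ((\<lambda>x. g x $ i) has_real_derivative g' $ i) F"
  unfolding has_real_derivative_iff_has_vector_derivative
  by (rule bounded_linear.has_vector_derivative[OF bounded_linear_vec_nth])

lemma transition:
  fixes \<delta> \<gamma> :: "real \<Rightarrow> real^2" and k :: "real \<Rightarrow> real"
  assumes d\<delta>: "\<And>t. t \<in> N \<Longrightarrow> (\<delta> has_vector_derivative \<delta>' t) (at t) \<and> (\<delta>' has_vector_derivative \<delta>'' t) (at t)"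
    and d\<gamma>: "\<And>s. s \<in> {p<..<q} \<Longrightarrow> (\<gamma> has_vector_derivative \<gamma>' s) (at s) \<and> (\<gamma>' has_vector_derivative \<gamma>'' s) (at s)"
    and nz: "\<And>s. s \<in> {p<..<q} \<Longrightarrow> \<gamma>' s \<noteq> 0"
    and N: "open N" "t1 \<in> N"
    and kc: "continuous_on N k" and kin: "\<And>t. t\<in>N \<Longrightarrow> k t \<in> {p<..<q}"
    and eq: "\<And>t. t\<in>N \<Longrightarrow> \<delta> t = \<gamma> (k t)"
  shows "\<exists>K1 k2 e. e > 0 \<and> ball t1 e \<subseteq> N \<and> (\<forall>t\<in>ball t1 e. (k has_real_derivative K1 t) (at t))
           \<and> (K1 has_real_derivative k2) (at t1)"
proof -
  define s1 where "s1 = k t1"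
  have s1: "s1 \<in> {p<..<q}" using kin N s1_def by auto
  obtain i where i: "\<gamma>' s1 $ i \<noteq> 0" using nz[OF s1] by (metis vec_eq_iff zero_index)
  define f where "f = (\<lambda>s. \<gamma> s $ i)"
  define f' where "f' = (\<lambda>s. \<gamma>' s $ i)"
  have fder: "(f has_real_derivative f' s) (at s)" if "s \<in> {p<..<q}" for s
    unfolding f_def f'_def using d\<gamma>[OF that] comp_deriv by blast
  have "isCont f' s1"
    unfolding f'_def using has_vector_derivative_continuous[OF conjunct2[OF d\<gamma>[OF s1]]]
    by (intro continuous_intros)
  then obtain \<eta>0 where \<eta>0: "\<eta>0 > 0" "\<And>y. dist s1 y < \<eta>0 \<Longrightarrow> f' y \<noteq> 0"
    using continuous_at_avoid[of s1 f' 0] i f'_def by auto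
  define \<eta> where "\<eta> = min \<eta>0 (min (s1 - p) (q - s1))"
  have \<eta>: "\<eta> > 0" using \<eta>0 s1 by (auto simp: \<eta>_def)
  have ballpq: "ball s1 \<eta> \<subseteq> {p<..<q}" by (auto simp: \<eta>_def dist_real_def)
  have f'nz: "f' y \<noteq> 0" if "y \<in> ball s1 \<eta>" for y using that \<eta>0 by (auto simp: \<eta>_def dist_commute)
  have "isCont k t1" using kc N by (simp add: continuous_on_eq_continuous_at)
  then obtain e0 where e0: "e0 > 0" "\<And>x'. dist x' t1 < e0 \<Longrightarrow> dist (k x') (k t1) < \<eta>"
    using \<eta> unfolding continuous_at_eps_delta by blast
  obtain e1 where e1: "e1 > 0" "ball t1 e1 \<subseteq> N" using N openE by blast
  define e where "e = min e0 e1"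
  have e: "e > 0" "ball t1 e \<subseteq> N" using e0 e1 by (auto simp: e_def)
  have kB: "k t \<in> ball s1 \<eta>" if "t \<in> ball t1 e" for t
    using that e0(2)[of t] by (auto simp: e_def s1_def dist_commute)
  define K1 where "K1 = (\<lambda>t. \<delta>' t $ i / f' (k t))"
  have kder: "(k has_real_derivative K1 t) (at t)" if t: "t \<in> ball t1 e" for t
  proof -
    define c where "c = k t"
    have c: "c \<in> ball s1 \<eta>" using kB t c_def by auto
    define D where "D = (\<lambda>z. if z = c then f' c else (f z - f c) / (z - c))"
    have "((\<lambda>z. (f z - f c) / (z - c)) \<longlongrightarrow> f' c) (at c)"
      using fder[of c] c ballpq unfolding has_field_derivative_iff by blast
    then have "(D \<longlongrightarrow> f' c) (at c)"
      by (rule Lim_transform_eventually) (auto simp: D_def eventually_at_filter)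
    then have Dc: "isCont D c" by (simp add: isCont_def D_def)
    have fneq: "f a' \<noteq> f b'" if ab: "a' < b'" "a' \<in> ball s1 \<eta>" "b' \<in> ball s1 \<eta>" for a' b'
    proof -
      have conv: "x \<in> ball s1 \<eta>" if "a' \<le> x" "x \<le> b'" for x
        using that ab by (auto simp: dist_real_def)
      have der: "(f has_real_derivative f' x) (at x)" if "a' \<le> x" "x \<le> b'" for x
        using fder conv[OF that] ballpq by blast
      obtain \<xi> where \<xi>: "a' < \<xi>" "\<xi> < b'" "f b' - f a' = (b' - a') * f' \<xi>"
        using MVT2[of a' b' f f', OF ab(1) der] by blast
      have "f' \<xi> \<noteq> 0" using f'nz conv \<xi> by auto
      then show ?thesis using \<xi> ab by auto
    qed
    have Dnz: "D z \<noteq> 0" if "z \<in> ball s1 \<eta>" for z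
    proof (cases "z = c")
      case True then show ?thesis using f'nz c by (simp add: D_def)
    next
      case False
      then have "f z \<noteq> f c" using fneq[of z c] fneq[of c z] c that by (cases "z < c") auto
      then show ?thesis using False by (simp add: D_def)
    qed
    have Deq: "f z - f c = D z * (z - c)" for z by (simp add: D_def)
    have dt: "((\<lambda>y. \<delta> y $ i) has_real_derivative \<delta>' t $ i) (at t)"
      using d\<delta> e t comp_deriv by blast
    then have E: "((\<lambda>y. (\<delta> y $ i - \<delta> t $ i) / (y - t)) \<longlongrightarrow> \<delta>' t $ i) (at t)"
      unfolding has_field_derivative_iff .
    have kct: "isCont k t" using kc N e t by (meson continuous_on_eq_continuous_at subsetD)
    have "((\<lambda>y. D (k y)) \<longlongrightarrow> D c) (at t)"
      using isCont_tendsto_compose[OF Dc] kct c_def by (simp add: isCont_def)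
    then have lim: "((\<lambda>y. ((\<delta> y $ i - \<delta> t $ i) / (y - t)) / D (k y)) \<longlongrightarrow> \<delta>' t $ i / D c) (at t)"
      using E Dnz c by (intro tendsto_divide) auto
    have ev: "\<forall>\<^sub>F y in at t. ((\<delta> y $ i - \<delta> t $ i) / (y - t)) / D (k y) = (k y - k t) / (y - t)"
    proof -
      have "\<forall>\<^sub>F y in nhds t. y \<in> ball t1 e" using t by (intro eventually_nhds_in_open) auto
      then have "\<forall>\<^sub>F y in at t. y \<in> ball t1 e" by (simp add: eventually_at_filter eventually_mono)
      then show ?thesis
      proof (rule eventually_mono)
        fix y assume y: "y \<in> ball t1 e"
        have "\<delta> y $ i - \<delta> t $ i = f (k y) - f c"
          using eq[of y] eq[of t] e(2) y t by (auto simp: f_def c_def subset_iff)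
        also have "\<dots> = D (k y) * (k y - k t)" using Deq c_def by simp
        finally show "((\<delta> y $ i - \<delta> t $ i) / (y - t)) / D (k y) = (k y - k t) / (y - t)"
          using Dnz kB y by auto
      qed
    qed
    have "((\<lambda>y. (k y - k t) / (y - t)) \<longlongrightarrow> \<delta>' t $ i / D c) (at t)"
      using Lim_transform_eventually[OF lim ev] .
    then show ?thesis unfolding has_field_derivative_iff K1_def by (simp add: D_def c_def)
  qed
  have t1e: "t1 \<in> ball t1 e" using e by auto
  have "((\<lambda>t. \<gamma>' (k t)) has_vector_derivative K1 t1 *\<^sub>R \<gamma>'' (k t1)) (at t1)"
    using vector_diff_chain_at[OF kder[OF t1e, unfolded has_real_derivative_iff_has_vector_derivative], of \<gamma>' "\<gamma>'' (k t1)"]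
      d\<gamma> kin N by (auto simp: o_def)
  then have g1: "((\<lambda>t. f' (k t)) has_real_derivative (K1 t1 *\<^sub>R \<gamma>'' (k t1)) $ i) (at t1)"
    unfolding f'_def by (rule comp_deriv)
  have g2: "((\<lambda>t. \<delta>' t $ i) has_real_derivative \<delta>'' t1 $ i) (at t1)"
    using d\<delta> N comp_deriv by blast
  have "((\<lambda>t. \<delta>' t $ i / f' (k t)) has_real_derivative ((\<delta>'' t1 $ i) * f' (k t1) - \<delta>' t1 $ i * (K1 t1 *\<^sub>R \<gamma>'' (k t1)) $ i) / (f' (k t1) * f' (k t1))) (at t1)"
    by (rule DERIV_divide[OF g2 g1]) (use f'nz kB t1e in auto)
  then have "(K1 has_real_derivative ((\<delta>'' t1 $ i) * f' (k t1) - \<delta>' t1 $ i * (K1 t1 *\<^sub>R \<gamma>'' (k t1)) $ i) / (f' (k t1) * f' (k t1))) (at t1)"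
    by (simp only: K1_def[symmetric])
  then show ?thesis using e kder by blast
qed




lemma ext_fun:
  fixes c0 c1 c2 t1 :: real
  assumes c1: "c1 > 0"
  shows "\<exists>E E1 E2. (\<forall>t. (E has_real_derivative E1 t) (at t) \<and> (E1 has_real_derivative E2 t) (at t))
     \<and> continuous_on UNIV E2
     \<and> E t1 = c0 \<and> E1 t1 = c1 \<and> E2 t1 = c2
     \<and> (\<forall>t\<ge>t1. c1/2 \<le> E1 t \<and> E1 t \<le> 3*c1/2 \<and> \<bar>E2 t\<bar> \<le> \<bar>c2\<bar> \<and> c0 + c1/2*(t-t1) \<le> E t)"
proof -
  define M where "M = max 1 (2*\<bar>c2\<bar>/c1)"
  have M: "M > 0" "M \<ge> 1" using c1 by (auto simp: M_def)
  have "2*\<bar>c2\<bar>/c1 \<le> M" by (simp add: M_def)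
  then have "2*\<bar>c2\<bar> \<le> M * c1" using c1 by (simp add: divide_le_eq)
  then have M3: "\<bar>c2\<bar>/M \<le> c1/2" using M by (simp add: divide_le_eq mult.commute)
  note M = M M3
  define E where "E = (\<lambda>t. c0 + c1*(t-t1) + c2*((t-t1)/M - (1 - exp(-M*(t-t1)))/M^2))"
  define E1 where "E1 = (\<lambda>t. c1 + c2*(1 - exp(-M*(t-t1)))/M)"
  define E2 where "E2 = (\<lambda>t. c2*exp(-M*(t-t1)))"
  have d1: "(E has_real_derivative E1 t) (at t)" for t
    unfolding E_def E1_def using M
    by (auto intro!: derivative_eq_intros simp: field_simps power2_eq_square)
  have d2: "(E1 has_real_derivative E2 t) (at t)" for t
    unfolding E1_def E2_def using M
    by (auto intro!: derivative_eq_intros simp: field_simps)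
  have ce: "continuous_on UNIV E2" unfolding E2_def by (intro continuous_intros)
  have bnd: "c1/2 \<le> E1 t \<and> E1 t \<le> 3*c1/2 \<and> \<bar>E2 t\<bar> \<le> \<bar>c2\<bar> \<and> c0 + c1/2*(t-t1) \<le> E t" if t: "t \<ge> t1" for t
  proof -
    have ex: "0 < exp(-M*(t-t1))" "exp(-M*(t-t1)) \<le> 1" using M t by auto
    then have a: "\<bar>c2*(1 - exp(-M*(t-t1)))/M\<bar> \<le> c1/2"
    proof -
      have "\<bar>c2*(1 - exp(-M*(t-t1)))/M\<bar> = (\<bar>c2\<bar>/M) * (1 - exp(-M*(t-t1)))"
        using ex M by (simp add: abs_mult)
      also have "\<dots> \<le> (\<bar>c2\<bar>/M) * 1" using ex M by (intro mult_left_mono) auto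
      finally show ?thesis using M(3) by linarith
    qed
    have b: "\<bar>E2 t\<bar> \<le> \<bar>c2\<bar>" using ex unfolding E2_def by (simp add: abs_mult mult_left_le)
    have c: "\<bar>c2*((t-t1)/M - (1 - exp(-M*(t-t1)))/M^2)\<bar> \<le> c1/2*(t-t1)"
    proof -
      have "exp(-M*(t-t1)) \<ge> 1 + (-M*(t-t1))" by (rule exp_ge_add_one_self)
      then have num: "0 \<le> M*(t-t1) - (1 - exp(-M*(t-t1)))" by simp
      have h1: "(t-t1)/M - (1 - exp(-M*(t-t1)))/M^2 = (M*(t-t1) - (1 - exp(-M*(t-t1))))/M^2"
        using M by (simp add: field_simps power2_eq_square)
      have "0 \<le> (t-t1)/M - (1 - exp(-M*(t-t1)))/M^2" unfolding h1 using num by simp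
      moreover have "0 \<le> (1 - exp(-M*(t-t1)))/M^2" using ex by simp
      ultimately have "0 \<le> (t-t1)/M - (1 - exp(-M*(t-t1)))/M^2" "(t-t1)/M - (1 - exp(-M*(t-t1)))/M^2 \<le> (t-t1)/M"
        by linarith+
      then have "\<bar>c2*((t-t1)/M - (1 - exp(-M*(t-t1)))/M^2)\<bar> \<le> \<bar>c2\<bar> * ((t-t1)/M)"
        unfolding abs_mult by (intro mult_left_mono) auto
      also have "\<dots> = (\<bar>c2\<bar>/M) * (t-t1)" by simp
      also have "\<dots> \<le> c1/2*(t-t1)" using M t by (intro mult_right_mono) auto
      finally show ?thesis .
    qed
    define X where "X = c2*(1 - exp(-M*(t-t1)))/M"
    define Y where "Y = c2*((t-t1)/M - (1 - exp(-M*(t-t1)))/M^2)"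
    have e1: "E1 t = c1 + X" by (simp add: E1_def X_def)
    have e0: "E t = c0 + c1*(t-t1) + Y" by (simp add: E_def Y_def)
    have x: "-(c1/2) \<le> X" "X \<le> c1/2" using a abs_ge_self[of X] abs_ge_minus_self[of X] unfolding X_def[symmetric] by linarith+
    have y: "-(c1/2*(t-t1)) \<le> Y" using c abs_ge_minus_self[of Y] unfolding Y_def[symmetric] by linarith
    show ?thesis unfolding e1 e0 using x y b by (intro conjI; linarith)
  qed
  show ?thesis
    apply (rule exI[of _ E], rule exI[of _ E1], rule exI[of _ E2])
    using d1 d2 ce bnd by (auto simp: E_def E1_def E2_def)
qed




definition reg_data :: "(real \<Rightarrow> real^2) \<Rightarrow> real \<Rightarrow> real \<Rightarrow> bool" where
  "reg_data \<gamma> a b \<longleftrightarrow> (\<exists>\<gamma>' \<gamma>''.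
        (\<forall>t\<in>{a<..<b}. (\<gamma> has_vector_derivative \<gamma>' t) (at t) \<and>
                         (\<gamma>' has_vector_derivative \<gamma>'' t) (at t)) \<and>
        continuous_on {a<..<b} \<gamma>'' \<and>
        bounded (\<gamma> ` {a<..<b}) \<and> bounded (\<gamma>' ` {a<..<b}) \<and> bounded (\<gamma>'' ` {a<..<b}) \<and>
        (\<exists>c>0. \<forall>t\<in>{a<..<b}. c \<le> norm (\<gamma>' t)))"

lemma regular_curve_iff: "regular_curve \<gamma> a b \<longleftrightarrow> a < b \<and> continuous_on {a..b} \<gamma> \<and>
     (\<forall>x\<in>{a..b}. \<forall>y\<in>{a..b}. x < y \<and> (x, y) \<noteq> (a, b) \<longrightarrow> \<gamma> x \<noteq> \<gamma> y) \<and> reg_data \<gamma> a b"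
  unfolding regular_curve_def reg_data_def by blast

lemma glue:
  fixes \<delta> \<gamma> :: "real \<Rightarrow> real^2" and k :: "real \<Rightarrow> real"
  assumes r\<delta>: "regular_curve \<delta> t0 T" and t1: "t0 < t1" "t1 < T"
    and r\<gamma>: "regular_curve \<gamma> p q"
    and N: "open N" "t1 \<in> N" "N \<subseteq> {t0<..<T}"
    and kc: "continuous_on N k" and kin: "\<And>t. t\<in>N \<Longrightarrow> k t \<in> {p<..<q}"
    and eq: "\<And>t. t\<in>N \<Longrightarrow> \<delta> t = \<gamma> (k t)"
    and kmono: "strict_mono_on N k"
    and s: "k t1 < s" "s \<le> q"
  shows "\<exists>T' E. t1 < T' \<and> continuous_on {t1..T'} E \<and> strict_mono_on {t1..T'} E \<and> E t1 = k t1 \<and> E T' = s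
     \<and> (\<forall>t\<in>{t1..T'}. E t \<in> {k t1..s}) \<and> continuous_on {t0..T'} (\<lambda>t. if t \<le> t1 then \<delta> t else \<gamma> (E t))
     \<and> reg_data (\<lambda>t. if t \<le> t1 then \<delta> t else \<gamma> (E t)) t0 T'"
proof -
  obtain \<delta>' \<delta>'' c\<delta> where d\<delta>: "\<And>t. t\<in>{t0<..<T} \<Longrightarrow> (\<delta> has_vector_derivative \<delta>' t) (at t) \<and>
                         (\<delta>' has_vector_derivative \<delta>'' t) (at t)"
    and c\<delta>2: "continuous_on {t0<..<T} \<delta>''" and b\<delta>0: "bounded (\<delta> ` {t0<..<T})" and b\<delta>1: "bounded (\<delta>' ` {t0<..<T})"
    and b\<delta>2: "bounded (\<delta>'' ` {t0<..<T})" and c\<delta>: "c\<delta> > 0" "\<And>t. t\<in>{t0<..<T} \<Longrightarrow> c\<delta> \<le> norm (\<delta>' t)"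
    and cont\<delta>: "continuous_on {t0..T} \<delta>"
    using r\<delta> unfolding regular_curve_def by metis
  obtain \<gamma>' \<gamma>'' c\<gamma> where d\<gamma>: "\<And>t. t\<in>{p<..<q} \<Longrightarrow> (\<gamma> has_vector_derivative \<gamma>' t) (at t) \<and>
                         (\<gamma>' has_vector_derivative \<gamma>'' t) (at t)"
    and c\<gamma>2: "continuous_on {p<..<q} \<gamma>''" and b\<gamma>0: "bounded (\<gamma> ` {p<..<q})" and b\<gamma>1: "bounded (\<gamma>' ` {p<..<q})"
    and b\<gamma>2: "bounded (\<gamma>'' ` {p<..<q})" and c\<gamma>: "c\<gamma> > 0" "\<And>t. t\<in>{p<..<q} \<Longrightarrow> c\<gamma> \<le> norm (\<gamma>' t)"
    and cont\<gamma>: "continuous_on {p..q} \<gamma>"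
    using r\<gamma> unfolding regular_curve_def by metis
  have nz: "\<gamma>' s \<noteq> 0" if "s \<in> {p<..<q}" for s using c\<gamma> that by fastforce
  have d\<delta>N: "(\<delta> has_vector_derivative \<delta>' t) (at t) \<and> (\<delta>' has_vector_derivative \<delta>'' t) (at t)" if "t \<in> N" for t
    using d\<delta> N that by blast
  obtain K1 k2 e where e: "e > 0" "ball t1 e \<subseteq> N" and kd: "\<And>t. t \<in> ball t1 e \<Longrightarrow> (k has_real_derivative K1 t) (at t)"
    and K1d: "(K1 has_real_derivative k2) (at t1)"
    using transition[of N \<delta> \<delta>' \<delta>'' p q \<gamma> \<gamma>' \<gamma>'' t1 k, OF d\<delta>N d\<gamma> nz N(1,2) kc kin eq] by blast
  define c0 where "c0 = k t1"
  define c1 where "c1 = K1 t1"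
  have c0: "c0 \<in> {p<..<q}" using kin N c0_def by auto
  have t1e: "t1 \<in> ball t1 e" using e by simp
  have dchain: "\<delta>' t = K1 t *\<^sub>R \<gamma>' (k t)" if t: "t \<in> ball t1 e" for t
  proof -
    have tN: "t \<in> N" using t e by auto
    have "((\<gamma> \<circ> k) has_vector_derivative K1 t *\<^sub>R \<gamma>' (k t)) (at t)"
      using vector_diff_chain_at[OF kd[OF t, unfolded has_real_derivative_iff_has_vector_derivative]] d\<gamma> kin tN by blast
    then have "(\<delta> has_vector_derivative K1 t *\<^sub>R \<gamma>' (k t)) (at t)"
      by (rule has_vector_derivative_transform_within_open[OF _ N(1) tN]) (simp add: eq)
    then show ?thesis using d\<delta>N[OF tN] vector_derivative_unique_at by blast
  qed
  have c1nz: "c1 \<noteq> 0"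
  proof
    assume "c1 = 0"
    then have "\<delta>' t1 = 0" using dchain[OF t1e] c1_def by simp
    then show False using c\<delta> N t1 by force
  qed
  have c1pos: "c1 > 0"
  proof (rule ccontr)
    assume "\<not> c1 > 0"
    then have "c1 < 0" using c1nz by simp
    then obtain d where d: "d > 0" "\<And>h. h > 0 \<Longrightarrow> h < d \<Longrightarrow> k t1 > k (t1 + h)"
      using DERIV_neg_dec_right[OF kd[OF t1e]] c1_def by blast
    define h where "h = min d e / 2"
    have h: "h > 0" "h < d" "h < e" using d e by (auto simp: h_def)
    have "t1 + h \<in> N" using e h by (auto simp: dist_real_def)
    then have "k t1 < k (t1 + h)" using kmono N h by (auto simp: strict_mono_on_def)
    then show False using d h by force
  qed
  have dd1: "((\<lambda>t. K1 t *\<^sub>R \<gamma>' (k t)) has_vector_derivative (k2 *\<^sub>R \<gamma>' c0 + (c1 * c1) *\<^sub>R \<gamma>'' c0)) (at t1)"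
  proof -
    have g: "((\<lambda>t. \<gamma>' (k t)) has_vector_derivative c1 *\<^sub>R \<gamma>'' c0) (at t1)"
      using vector_diff_chain_at[OF kd[OF t1e, unfolded has_real_derivative_iff_has_vector_derivative], of \<gamma>' "\<gamma>'' (k t1)"]
        d\<gamma> c0 by (auto simp: o_def c0_def c1_def)
    show ?thesis using has_vector_derivative_scaleR[OF K1d g] by (simp add: c1_def c0_def algebra_simps)
  qed
  have dd2: "\<delta>'' t1 = k2 *\<^sub>R \<gamma>' c0 + (c1 * c1) *\<^sub>R \<gamma>'' c0"
  proof -
    have "(\<delta>' has_vector_derivative (k2 *\<^sub>R \<gamma>' c0 + (c1 * c1) *\<^sub>R \<gamma>'' c0)) (at t1)"
      by (rule has_vector_derivative_transform_within_open[OF dd1 open_ball t1e]) (simp add: dchain)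
    then show ?thesis using d\<delta>N[OF N(2)] vector_derivative_unique_at by blast
  qed
  have dd0: "\<delta>' t1 = c1 *\<^sub>R \<gamma>' c0" using dchain[OF t1e] by (simp add: c0_def c1_def)
  obtain E E1 E2 where Ed: "\<And>t. (E has_real_derivative E1 t) (at t) \<and> (E1 has_real_derivative E2 t) (at t)"
    and E2c: "continuous_on UNIV E2" and E0: "E t1 = c0" "E1 t1 = c1" "E2 t1 = k2"
    and Eb: "\<And>t. t \<ge> t1 \<Longrightarrow> c1/2 \<le> E1 t \<and> E1 t \<le> 3*c1/2 \<and> \<bar>E2 t\<bar> \<le> \<bar>k2\<bar> \<and> c0 + c1/2*(t-t1) \<le> E t"
    using ext_fun[OF c1pos, of t1 c0 k2] by blast
  have Econt: "continuous_on A E" for A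
    using Ed by (meson DERIV_isCont continuous_at_imp_continuous_on)
  have E1cont: "continuous_on A E1" for A
    using Ed by (meson DERIV_isCont continuous_at_imp_continuous_on)
  have Einc: "E a < E b" if "t1 \<le> a" "a < b" for a b
    using DERIV_pos_imp_increasing[of a b E, OF that(2)] Ed Eb c1pos that
    by (metis half_gt_zero less_le_trans order.trans)
  define T2 where "T2 = t1 + 2*(s - c0)/c1"
  have T2: "t1 \<le> T2" using s c1pos by (simp add: T2_def c0_def)
  have "c1/2*(T2-t1) = s - c0" using c1pos by (simp add: T2_def)
  then have "s \<le> E T2" using Eb[OF T2] by linarith
  then obtain T' where T': "t1 \<le> T'" "T' \<le> T2" "E T' = s"
    using IVT'[of E t1 s T2, OF _ _ T2 Econt] E0 s c0_def by auto
  have T'1: "t1 < T'" using T' E0 s c0_def by (metis order.order_iff_strict order.irrefl)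
  have Emono: "strict_mono_on {t1..T'} E" by (auto simp: strict_mono_on_def intro!: Einc)
  have Erange: "E t \<in> {c0..s}" if "t \<in> {t1..T'}" for t
    using that Einc[of t1 t] Einc[of t T'] E0 T' by (cases "t = t1"; cases "t = T'") (auto simp: less_eq_real_def)
  have Erange2: "E t \<in> {p<..<q}" if "t1 \<le> t" "t < T'" for t
    using that Einc[of t T'] Erange[of t] c0 s T' by auto
  define F where "F = (\<lambda>t. if t \<le> t1 then \<delta> t else \<gamma> (E t))"
  define G' where "G' = (\<lambda>t. E1 t *\<^sub>R \<gamma>' (E t))"
  define G'' where "G'' = (\<lambda>t. E2 t *\<^sub>R \<gamma>' (E t) + (E1 t * E1 t) *\<^sub>R \<gamma>'' (E t))"
  define F' where "F' = (\<lambda>t. if t \<le> t1 then \<delta>' t else G' t)"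
  define F'' where "F'' = (\<lambda>t. if t \<le> t1 then \<delta>'' t else G'' t)"
  have Gd: "((\<lambda>t. \<gamma> (E t)) has_vector_derivative G' t) (at t) \<and> (G' has_vector_derivative G'' t) (at t)"
    if "t1 \<le> t" "t < T'" for t
  proof -
    have Et: "E t \<in> {p<..<q}" using Erange2 that by blast
    have a: "((\<lambda>t. \<gamma> (E t)) has_vector_derivative G' t) (at t)"
      using vector_diff_chain_at[OF Ed[of t, THEN conjunct1, unfolded has_real_derivative_iff_has_vector_derivative], of \<gamma> "\<gamma>' (E t)"]
        d\<gamma>[OF Et] by (simp add: o_def G'_def)
    have b: "((\<lambda>t. \<gamma>' (E t)) has_vector_derivative E1 t *\<^sub>R \<gamma>'' (E t)) (at t)"
      using vector_diff_chain_at[OF Ed[of t, THEN conjunct1, unfolded has_real_derivative_iff_has_vector_derivative], of \<gamma>' "\<gamma>'' (E t)"]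
        d\<gamma>[OF Et] by (simp add: o_def)
    have "(G' has_vector_derivative G'' t) (at t)"
      using has_vector_derivative_scaleR[OF Ed[of t, THEN conjunct2] b] unfolding G'_def G''_def
      by (simp add: algebra_simps)
    then show ?thesis using a by blast
  qed
  have Fd: "(F has_vector_derivative F' t) (at t) \<and> (F' has_vector_derivative F'' t) (at t)"
    if t: "t \<in> {t0<..<T'}" for t
  proof (cases "t < t1")
    case True
    have tT: "t \<in> {t0<..<T}" using t True t1 by auto
    have "(F has_vector_derivative \<delta>' t) (at t)"
      by (rule has_vector_derivative_transform_within_open[of \<delta> _ _ "{..<t1}"]) (use d\<delta>[OF tT] True in \<open>auto simp: F_def\<close>)
    moreover have "(F' has_vector_derivative \<delta>'' t) (at t)"
      by (rule has_vector_derivative_transform_within_open[of \<delta>' _ _ "{..<t1}"]) (use d\<delta>[OF tT] True in \<open>auto simp: F'_def\<close>)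
    ultimately show ?thesis using True by (simp add: F'_def F''_def)
  next
    case False
    show ?thesis
    proof (cases "t = t1")
      case False
      then have tt: "t1 < t" "t < T'" using \<open>\<not> t < t1\<close> t by auto
      have "(F has_vector_derivative G' t) (at t)"
        by (rule has_vector_derivative_transform_within_open[of "\<lambda>t. \<gamma> (E t)" _ _ "{t1<..}"])
          (use Gd[of t] tt in \<open>auto simp: F_def\<close>)
      moreover have "(F' has_vector_derivative G'' t) (at t)"
        by (rule has_vector_derivative_transform_within_open[of G' _ _ "{t1<..}"])
          (use Gd[of t] tt in \<open>auto simp: F'_def\<close>)
      ultimately show ?thesis using tt by (simp add: F'_def F''_def)
    next
      case True
      have tT: "t1 \<in> {t0<..<T}" using t1 by auto
      have G't1: "G' t1 = \<delta>' t1" using dd0 E0 by (simp add: G'_def)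
      have G''t1: "G'' t1 = \<delta>'' t1" using dd2 E0 by (simp add: G''_def)
      have l1: "(F has_vector_derivative \<delta>' t1) (at t1 within {..t1})"
        by (rule has_vector_derivative_transform_within[OF has_vector_derivative_at_within[OF d\<delta>[OF tT, THEN conjunct1]], of 1])
          (auto simp: F_def)
      have gd1: "((\<lambda>t. \<gamma> (E t)) has_vector_derivative \<delta>' t1) (at t1)" "(G' has_vector_derivative \<delta>'' t1) (at t1)"
        using Gd[of t1] G't1 G''t1 T'1 by auto
      have r1: "(F has_vector_derivative \<delta>' t1) (at t1 within {t1..})"
        by (rule has_vector_derivative_transform_within[OF has_vector_derivative_at_within[OF gd1(1)], of 1])
          (use T'1 G't1 eq[OF N(2)] E0 c0_def in \<open>auto simp: F_def\<close>)
      have l2: "(F' has_vector_derivative \<delta>'' t1) (at t1 within {..t1})"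
        by (rule has_vector_derivative_transform_within[OF has_vector_derivative_at_within[OF d\<delta>[OF tT, THEN conjunct2]], of 1])
          (auto simp: F'_def)
      have r2: "(F' has_vector_derivative \<delta>'' t1) (at t1 within {t1..})"
        by (rule has_vector_derivative_transform_within[OF has_vector_derivative_at_within[OF gd1(2)], of 1])
          (use T'1 G't1 G''t1 in \<open>auto simp: F'_def\<close>)
      show ?thesis using has_vector_derivative_glue[OF l1 r1] has_vector_derivative_glue[OF l2 r2] True
        by (simp add: F'_def F''_def)
    qed
  qed
  have cF'': "continuous_on {t0<..<T'} F''"
  proof -
    have un: "{t0<..<T'} = {t0<..t1} \<union> {t1..<T'}" using t1 T'1 by auto
    have cl1: "closedin (top_of_set ({t0<..t1} \<union> {t1..<T'})) {t0<..t1}"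
      unfolding closedin_closed by (rule exI[of _ "{..t1}"]) (use t1 in auto)
    have cl2: "closedin (top_of_set ({t0<..t1} \<union> {t1..<T'})) {t1..<T'}"
      unfolding closedin_closed by (rule exI[of _ "{t1..}"]) (use t1 T'1 in auto)
    have c1: "continuous_on {t0<..t1} \<delta>''"
      by (rule continuous_on_subset[OF c\<delta>2]) (use t1 in auto)
    have cg'': "continuous_on {t1..<T'} (\<lambda>t. \<gamma>'' (E t))"
      by (rule continuous_on_compose2[OF c\<gamma>2 Econt]) (use Erange2 in auto)
    have cg': "continuous_on {t1..<T'} (\<lambda>t. \<gamma>' (E t))"
    proof -
      have "continuous_on {p<..<q} \<gamma>'"
        using d\<gamma> by (meson continuous_at_imp_continuous_on has_vector_derivative_continuous)
      then show ?thesis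
        by (rule continuous_on_compose2[OF _ Econt]) (use Erange2 in auto)
    qed
    have c2: "continuous_on {t1..<T'} G''"
      unfolding G''_def
      by (intro continuous_intros cg' cg'' E1cont continuous_on_subset[OF E2c]) auto
    have "continuous_on ({t0<..t1} \<union> {t1..<T'}) F''"
      unfolding F''_def
      by (rule continuous_on_cases_local[OF cl1 cl2 c1 c2]) (use dd2 E0 in \<open>auto simp: G''_def\<close>)
    then show ?thesis using un by simp
  qed
  have cF: "continuous_on {t0..T'} F"
  proof -
    have un: "{t0..T'} = {t0..t1} \<union> {t1..T'}" using t1 T'1 by auto
    have c1: "continuous_on {t0..t1} \<delta>"
      by (rule continuous_on_subset[OF cont\<delta>]) (use t1 in auto)
    have c2: "continuous_on {t1..T'} (\<lambda>t. \<gamma> (E t))"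
      by (rule continuous_on_compose2[OF cont\<gamma> Econt]) (use Erange c0 s in force)
    have "continuous_on ({t0..t1} \<union> {t1..T'}) F"
      unfolding F_def
      by (rule continuous_on_cases[OF _ _ c1 c2]) (use eq[OF N(2)] E0 c0_def in auto)
    then show ?thesis using un by simp
  qed
  obtain B1 where "\<forall>x\<in>{p<..<q}. norm (\<gamma>' x) \<le> B1"
    using b\<gamma>1 unfolding bounded_iff by auto
  then have B1: "\<And>x. x \<in> {p<..<q} \<Longrightarrow> norm (\<gamma>' x) \<le> B1" by blast
  obtain B2 where "\<forall>x\<in>{p<..<q}. norm (\<gamma>'' x) \<le> B2"
    using b\<gamma>2 unfolding bounded_iff by auto
  then have B2: "\<And>x. x \<in> {p<..<q} \<Longrightarrow> norm (\<gamma>'' x) \<le> B2" by blast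
  have b0: "bounded (F ` {t0<..<T'})"
  proof (rule bounded_subset[OF iffD2[OF bounded_Un conjI[OF b\<delta>0 b\<gamma>0]]])
    show "F ` {t0<..<T'} \<subseteq> \<delta> ` {t0<..<T} \<union> \<gamma> ` {p<..<q}"
      using Erange2 t1 by (auto simp: F_def)
  qed
  have b1: "bounded (F' ` {t0<..<T'})"
  proof (rule bounded_subset[OF iffD2[OF bounded_Un conjI[OF b\<delta>1 bounded_cball[of 0 "3*c1/2*B1"]]]])
    show "F' ` {t0<..<T'} \<subseteq> \<delta>' ` {t0<..<T} \<union> cball 0 (3*c1/2*B1)"
    proof
      fix x assume "x \<in> F' ` {t0<..<T'}"
      then obtain t where t: "t \<in> {t0<..<T'}" "x = F' t" by auto
      show "x \<in> \<delta>' ` {t0<..<T} \<union> cball 0 (3*c1/2*B1)"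
      proof (cases "t \<le> t1")
        case True then show ?thesis using t t1 by (auto simp: F'_def)
      next
        case False
        then have "E t \<in> {p<..<q}" using Erange2 t by auto
        then have Et: "E t \<in> {p<..<q}" .
        have e1: "0 \<le> E1 t" "E1 t \<le> 3*c1/2" using Eb[of t] False c1pos by auto
        have "norm (G' t) = E1 t * norm (\<gamma>' (E t))" using e1 by (simp add: G'_def)
        also have "\<dots> \<le> 3*c1/2 * B1" by (rule mult_mono) (use e1 B1[OF Et] c1pos in auto)
        finally have "norm (G' t) \<le> 3*c1/2*B1" .
        then show ?thesis using t False by (auto simp: F'_def)
      qed
    qed
  qed
  have b2: "bounded (F'' ` {t0<..<T'})"
  proof (rule bounded_subset[OF iffD2[OF bounded_Un conjI[OF b\<delta>2 bounded_cball[of 0 "\<bar>k2\<bar>*B1 + (3*c1/2)*(3*c1/2)*B2"]]]])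
    show "F'' ` {t0<..<T'} \<subseteq> \<delta>'' ` {t0<..<T} \<union> cball 0 (\<bar>k2\<bar>*B1 + (3*c1/2)*(3*c1/2)*B2)"
    proof
      fix x assume "x \<in> F'' ` {t0<..<T'}"
      then obtain t where t: "t \<in> {t0<..<T'}" "x = F'' t" by auto
      show "x \<in> \<delta>'' ` {t0<..<T} \<union> cball 0 (\<bar>k2\<bar>*B1 + (3*c1/2)*(3*c1/2)*B2)"
      proof (cases "t \<le> t1")
        case True then show ?thesis using t t1 by (auto simp: F''_def)
      next
        case False
        then have Et: "E t \<in> {p<..<q}" using Erange2 t by auto
        have e1: "0 \<le> E1 t" "E1 t \<le> 3*c1/2" using Eb[of t] False c1pos by auto
        have B1p: "0 \<le> B1" using B1[OF Et] norm_ge_zero order_trans by blast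
        have B2p: "0 \<le> B2" using B2[OF Et] norm_ge_zero order_trans by blast
        have "norm (E2 t *\<^sub>R \<gamma>' (E t)) = \<bar>E2 t\<bar> * norm (\<gamma>' (E t))" by simp
        also have "\<dots> \<le> \<bar>k2\<bar>*B1" by (rule mult_mono) (use Eb[of t] False B1[OF Et] in auto)
        finally have n1: "norm (E2 t *\<^sub>R \<gamma>' (E t)) \<le> \<bar>k2\<bar>*B1" .
        have "norm ((E1 t * E1 t) *\<^sub>R \<gamma>'' (E t)) = (E1 t * E1 t) * norm (\<gamma>'' (E t))" using e1 by simp
        also have "\<dots> \<le> ((3*c1/2)*(3*c1/2))*B2"
        proof (rule mult_mono)
          show "E1 t * E1 t \<le> (3*c1/2)*(3*c1/2)" using e1 by (intro mult_mono) auto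
        qed (use e1 B2[OF Et] B2p c1pos in auto)
        finally have n2: "norm ((E1 t * E1 t) *\<^sub>R \<gamma>'' (E t)) \<le> (3*c1/2)*(3*c1/2)*B2" by simp
        from n1 n2 have "norm (G'' t) \<le> \<bar>k2\<bar>*B1 + (3*c1/2)*(3*c1/2)*B2"
          unfolding G''_def by (meson add_mono norm_triangle_le)
        then show ?thesis using t False by (auto simp: F''_def)
      qed
    qed
  qed
  have lb: "min c\<delta> (c\<gamma> * (c1/2)) \<le> norm (F' t)" if t: "t \<in> {t0<..<T'}" for t
  proof (cases "t \<le> t1")
    case True then show ?thesis using t t1 c\<delta>(2)[of t] by (auto simp: F'_def)
  next
    case False
    then have Et: "E t \<in> {p<..<q}" using Erange2 t by auto
    have "c\<gamma> * (c1/2) \<le> norm (\<gamma>' (E t)) * E1 t"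
      using c\<gamma>(2)[OF Et] Eb[of t] False c\<gamma>(1) c1pos by (intro mult_mono) auto
    then have "c\<gamma> * (c1/2) \<le> norm (G' t)"
      using Eb[of t] False c1pos unfolding G'_def by (simp add: mult.commute)
    then show ?thesis using False by (simp add: F'_def)
  qed
  have "reg_data F t0 T'"
    unfolding reg_data_def
    apply (rule exI[of _ F'], rule exI[of _ F''])
    using Fd cF'' b0 b1 b2 lb c\<delta>(1) c\<gamma>(1) c1pos
    by (intro conjI exI[of _ "min c\<delta> (c\<gamma> * (c1/2))"]) auto
  moreover have "continuous_on {t1..T'} E" by (rule Econt)
  ultimately show ?thesis
    using T'1 Emono E0 T' Erange cF unfolding F_def c0_def by blast
qed



lemma loop_case:
  assumes r: "regular_curve \<gamma> a b" and ab: "\<gamma> a = \<gamma> b"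
    and S: "S \<in> \<gamma> ` {a..b}" and Q: "Q \<in> \<gamma> ` {a..b}" and SQ: "S \<noteq> Q"
  shows "\<exists>\<delta> a' b'. regular_curve \<delta> a' b' \<and> \<delta> ` {a'..b'} \<subseteq> \<gamma> ` {a..b} \<and> \<delta> a' = S \<and> \<delta> b' = Q"
proof -
  have ab': "a < b" using r by (simp add: regular_curve_def)
  have half: "\<exists>s. s \<in> {a..<b} \<and> \<gamma> s = X" if XX: "X \<in> \<gamma> ` {a..b}" for X
  proof -
    obtain s where s: "s \<in> {a..b}" "\<gamma> s = X" using XX by blast
    show ?thesis
    proof (cases "s = b")
      case True then show ?thesis using ab s ab' by (intro exI[of _ a]) auto
    next
      case False then show ?thesis using s by auto
    qed
  qed
  obtain s where s: "s \<in> {a..<b}" "\<gamma> s = S" using half[OF S] by blast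
  obtain q where q: "q \<in> {a..<b}" "\<gamma> q = Q" using half[OF Q] by blast
  have "s \<noteq> q" using s q SQ by auto
  then consider "s < q" | "q < s" by linarith
  then show ?thesis
  proof cases
    case 1
    have "regular_curve \<gamma> s q" using regular_restrict[OF r] s q 1 by auto
    then show ?thesis using s q 1 by (intro exI[of _ \<gamma>] exI[of _ s] exI[of _ q]) auto
  next
    case 2
    have rr: "regular_curve (\<lambda>t. \<gamma> (-t)) (-b) (-a)" by (rule regular_reverse[OF r])
    have "regular_curve (\<lambda>t. \<gamma> (-t)) (-s) (-q)" using regular_restrict[OF rr] s q 2 by auto
    moreover have "(\<lambda>t. \<gamma> (-t)) ` {-s..-q} \<subseteq> \<gamma> ` {a..b}"
    proof
      fix x assume "x \<in> (\<lambda>t. \<gamma> (-t)) ` {-s..-q}"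
      then obtain t where "t \<in> {-s..-q}" "x = \<gamma> (-t)" by auto
      then show "x \<in> \<gamma> ` {a..b}" using s q by (intro image_eqI[of _ _ "-t"]) auto
    qed
    ultimately show ?thesis using s q by (intro exI[of _ "\<lambda>t. \<gamma> (-t)"] exI[of _ "-s"] exI[of _ "-q"]) auto
  qed
qed



lemma path_conn:
  fixes L :: "(real^2) set"
  assumes "connected L"
    and ch: "\<forall>P\<in>L. \<exists>r>0. \<exists>\<gamma> a b. regular_curve \<gamma> a b \<and>
            (ball P r \<inter> L = \<gamma> ` {a..b} \<or> ball P r \<inter> L = \<gamma> ` {a<..<b})"
    and "S \<in> L" "Q \<in> L"
  shows "path_component L S Q"
proof (rule connected_induction_simple[OF assms(1) assms(3,4), where P = "path_component L S"])
  show "path_component L S S" using assms(3) by (rule path_component_refl)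
  fix a assume a: "a \<in> L"
  obtain r \<gamma> c d where r: "r > 0" "regular_curve \<gamma> c d"
    and img: "ball a r \<inter> L = \<gamma> ` {c..d} \<or> ball a r \<inter> L = \<gamma> ` {c<..<d}"
    using bspec[OF ch a] by blast
  have cont: "continuous_on {c..d} \<gamma>" using r by (simp add: regular_curve_def)
  have pc: "path_connected (ball a r \<inter> L)"
  proof (cases "ball a r \<inter> L = \<gamma> ` {c..d}")
    case True
    have "path_connected (\<gamma> ` {c..d})"
      by (rule path_connected_continuous_image[OF cont]) (simp add: convex_imp_path_connected)
    then show ?thesis using True by simp
  next
    case False
    then have e: "ball a r \<inter> L = \<gamma> ` {c<..<d}" using img by blast
    have c2: "continuous_on {c<..<d} \<gamma>" by (rule continuous_on_subset[OF cont]) auto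
    have "path_connected (\<gamma> ` {c<..<d})"
      by (rule path_connected_continuous_image[OF c2]) (simp add: convex_imp_path_connected)
    then show ?thesis using e by simp
  qed
  show "\<exists>T. openin (top_of_set L) T \<and> a \<in> T \<and> (\<forall>x\<in>T. \<forall>y\<in>T. path_component L S x \<longrightarrow> path_component L S y)"
  proof (intro exI conjI ballI impI)
    show "openin (top_of_set L) (ball a r \<inter> L)" using openin_open_Int[of "ball a r" L] by (simp add: Int_commute)
    show "a \<in> ball a r \<inter> L" using a r by auto
    fix x y assume xy: "x \<in> ball a r \<inter> L" "y \<in> ball a r \<inter> L" and "path_component L S x"
    moreover have "path_component L x y"
    proof -
      have "path_component (ball a r \<inter> L) x y" using pc xy unfolding path_connected_component by blast
      then show ?thesis by (rule path_component_of_subset[rotated]) blast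
    qed
    ultimately show "path_component L S y" using path_component_trans by blast
  qed
qed



lemma chart_compact:
  fixes L :: "(real^2) set"
  assumes r: "regular_curve \<gamma> a b" and rp: "r > 0" and P: "P \<in> L"
    and img: "(ball P r \<inter> L = \<gamma> ` {a..b} \<and> \<gamma> a \<noteq> \<gamma> b) \<or> ball P r \<inter> L = \<gamma> ` {a<..<b}"
  shows "\<exists>p q r'. a \<le> p \<and> p < q \<and> q \<le> b \<and> inj_on \<gamma> {p..q} \<and> r' > 0 \<and> ball P r' \<inter> L \<subseteq> \<gamma> ` {p..q} \<and> \<gamma> ` {p..q} \<subseteq> L"
proof -
  have ab: "a < b" and cont: "continuous_on {a..b} \<gamma>"
    and inj: "\<And>x y. x \<in> {a..b} \<Longrightarrow> y \<in> {a..b} \<Longrightarrow> x < y \<Longrightarrow> (x, y) \<noteq> (a, b) \<Longrightarrow> \<gamma> x \<noteq> \<gamma> y"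
    using r unfolding regular_curve_def by auto
  show ?thesis
  proof (cases "ball P r \<inter> L = \<gamma> ` {a..b} \<and> \<gamma> a \<noteq> \<gamma> b")
    case True
    have "inj_on \<gamma> {a..b}"
    proof (rule inj_onI)
      fix x y assume xy: "x \<in> {a..b}" "y \<in> {a..b}" "\<gamma> x = \<gamma> y"
      show "x = y"
      proof (rule ccontr)
        assume "x \<noteq> y"
        then consider "x < y" | "y < x" by linarith
        then show False
        proof cases
          case 1 then show False using inj[of x y] xy True by (cases "x = a \<and> y = b") auto
        next
          case 2 then show False using inj[of y x] xy True by (cases "y = a \<and> x = b") auto
        qed
      qed
    qed
    then show ?thesis using True ab rp by (intro exI[of _ a] exI[of _ b] exI[of _ r]) auto
  next
    case False
    then have img2: "ball P r \<inter> L = \<gamma> ` {a<..<b}" using img by blast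
    then obtain s0 where s0: "s0 \<in> {a<..<b}" "\<gamma> s0 = P" using P rp by (metis IntI centre_in_ball imageE)
    define p where "p = (a + s0)/2"
    define q where "q = (s0 + b)/2"
    have pq: "a < p" "p < s0" "s0 < q" "q < b" using s0 by (auto simp: p_def q_def)
    define K where "K = \<gamma> ` ({a..p} \<union> {q..b})"
    have "compact K" unfolding K_def
      by (rule compact_continuous_image[OF continuous_on_subset[OF cont]]) (use pq in auto)
    then have cK: "closed K" by (rule compact_imp_closed)
    have PK: "P \<notin> K"
    proof
      assume "P \<in> K"
      then obtain x where x: "x \<in> {a..p} \<union> {q..b}" "\<gamma> x = P" unfolding K_def by blast
      show False
      proof (cases "x \<le> p")
        case True then show ?thesis using inj[of x s0] x s0 pq by auto
      next
        case False then show ?thesis using inj[of s0 x] x s0 pq by auto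
      qed
    qed
    obtain r2 where r2: "r2 > 0" "ball P r2 \<subseteq> - K"
      using cK PK open_contains_ball[of "- K"] by (auto simp: open_Compl)
    define r' where "r' = min r r2"
    have sub: "ball P r' \<inter> L \<subseteq> \<gamma> ` {p..q}"
    proof
      fix y assume y: "y \<in> ball P r' \<inter> L"
      then have "y \<in> \<gamma> ` {a<..<b}" using img2 by (auto simp: r'_def)
      then obtain x where x: "x \<in> {a<..<b}" "y = \<gamma> x" by auto
      have "y \<notin> K" using y r2 by (auto simp: r'_def)
      then have "x \<in> {p..q}" using x unfolding K_def by force
      then show "y \<in> \<gamma> ` {p..q}" using x by auto
    qed
    have "inj_on \<gamma> {p..q}"
    proof (rule inj_onI)
      fix x y assume xy: "x \<in> {p..q}" "y \<in> {p..q}" "\<gamma> x = \<gamma> y"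
      show "x = y"
      proof (rule ccontr)
        assume "x \<noteq> y"
        then consider "x < y" | "y < x" by linarith
        then show False
          by cases (use inj[of x y] inj[of y x] xy pq in auto)
      qed
    qed
    moreover have "\<gamma> ` {p..q} \<subseteq> L" using img2 pq by auto
    ultimately show ?thesis using pq sub rp r2
      by (intro exI[of _ p] exI[of _ q] exI[of _ r']) (auto simp: r'_def)
  qed
qed





lemma local_data:
  fixes g :: "real \<Rightarrow> real^2" and L :: "(real^2) set"
  assumes arc: "arc g" and gL: "path_image g \<subseteq> L"
    and NL: "\<forall>P\<in>L. \<exists>r>0. \<exists>\<gamma> a b. regular_curve \<gamma> a b \<and>
            ((ball P r \<inter> L = \<gamma> ` {a..b} \<and> \<gamma> a \<noteq> \<gamma> b) \<or> ball P r \<inter> L = \<gamma> ` {a<..<b})"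
    and u: "u \<in> {0..1}"
  shows "\<exists>\<gamma> p q \<epsilon> h. regular_curve \<gamma> p q \<and> \<epsilon> > 0 \<and> continuous_on (ball u \<epsilon> \<inter> {0..1}) h
     \<and> strict_mono_on (ball u \<epsilon> \<inter> {0..1}) h \<and> (\<forall>w\<in>ball u \<epsilon> \<inter> {0..1}. h w \<in> {p..q} \<and> g w = \<gamma> (h w))"
proof -
  have gc: "continuous_on {0..1} g" and gi: "inj_on g {0..1}" using arc by (auto simp: arc_def path_def)
  define P where "P = g u"
  have PL: "P \<in> L" using gL u by (auto simp: P_def path_image_def)
  obtain r \<gamma> a b where r: "r > 0" "regular_curve \<gamma> a b"
    and img: "(ball P r \<inter> L = \<gamma> ` {a..b} \<and> \<gamma> a \<noteq> \<gamma> b) \<or> ball P r \<inter> L = \<gamma> ` {a<..<b}"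
    using bspec[OF NL PL] by blast
  obtain p q r' where pq: "a \<le> p" "p < q" "q \<le> b" and inj: "inj_on \<gamma> {p..q}" and r': "r' > 0"
    and sub: "ball P r' \<inter> L \<subseteq> \<gamma> ` {p..q}"
    using chart_compact[OF r(2) r(1) PL img] by blast
  have rpq: "regular_curve \<gamma> p q" using regular_restrict[OF r(2) pq] .
  have \<gamma>c: "continuous_on {p..q} \<gamma>" using rpq by (simp add: regular_curve_def)
  obtain \<epsilon> where \<epsilon>: "\<epsilon> > 0" "\<And>w. w \<in> {0..1} \<Longrightarrow> dist w u < \<epsilon> \<Longrightarrow> dist (g w) (g u) < r'"
    using gc u r' unfolding continuous_on_iff by metis
  define J where "J = ball u \<epsilon> \<inter> {0..1}"
  have gJ: "g w \<in> \<gamma> ` {p..q}" if "w \<in> J" for w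
  proof -
    have "g w \<in> L" using gL that by (auto simp: J_def path_image_def)
    moreover have "g w \<in> ball P r'" using \<epsilon>(2)[of w] that by (auto simp: J_def P_def dist_commute)
    ultimately show ?thesis using sub by blast
  qed
  define hinv where "hinv = inv_into {p..q} \<gamma>"
  define h where "h = (\<lambda>w. hinv (g w))"
  have hp: "h w \<in> {p..q} \<and> g w = \<gamma> (h w)" if "w \<in> J" for w
    using gJ[OF that] unfolding h_def hinv_def by (metis f_inv_into_f inv_into_into)
  have hinvc: "continuous_on (\<gamma> ` {p..q}) hinv"
    unfolding hinv_def by (rule continuous_on_inv[OF \<gamma>c compact_Icc]) (simp add: inj)
  have hc: "continuous_on J h"
    unfolding h_def
    by (rule continuous_on_compose2[OF hinvc continuous_on_subset[OF gc]]) (use gJ in \<open>auto simp: J_def\<close>)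
  have hi: "inj_on h J"
  proof (rule inj_onI)
    fix x y assume xy: "x \<in> J" "y \<in> J" "h x = h y"
    then have "g x = g y" using hp by metis
    then show "x = y" using gi xy by (auto simp: J_def inj_on_def)
  qed
  have "convex J" unfolding J_def
    by (intro convex_Int convex_ball convex_real_interval)
  then have iJ: "is_interval J" by (simp add: is_interval_convex_1)
  have "strict_mono_on J h \<or> strict_antimono_on J h"
    using injective_eq_monotone_map[OF iJ hc] hi by blast
  then show ?thesis
  proof
    assume "strict_mono_on J h"
    then show ?thesis using rpq \<epsilon> hc hp unfolding J_def by blast
  next
    assume am: "strict_antimono_on J h"
    have rr: "regular_curve (\<lambda>t. \<gamma> (-t)) (-q) (-p)" by (rule regular_reverse[OF rpq])
    have "continuous_on J (\<lambda>w. - h w)" by (intro continuous_intros hc)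
    moreover have "strict_mono_on J (\<lambda>w. - h w)"
      using am by (auto simp: monotone_on_def)
    moreover have "\<forall>w\<in>J. - h w \<in> {-q..-p} \<and> g w = \<gamma> (- (- h w))" using hp by auto
    ultimately show ?thesis using rr \<epsilon> unfolding J_def by blast
  qed
qed



definition Good :: "(real \<Rightarrow> real^2) \<Rightarrow> real \<Rightarrow> bool" where
  "Good g u \<longleftrightarrow> (\<exists>\<delta> t0 T \<phi>. regular_curve \<delta> t0 T \<and> continuous_on {t0..T} \<phi> \<and> strict_mono_on {t0..T} \<phi>
      \<and> \<phi> t0 = 0 \<and> \<phi> T = u \<and> (\<forall>t\<in>{t0..T}. \<delta> t = g (\<phi> t)))"

lemma step:
  fixes g \<gamma> :: "real \<Rightarrow> real^2"
  assumes gi: "inj_on g {0..1}"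
    and r\<gamma>: "regular_curve \<gamma> p q" and \<epsilon>: "\<epsilon> > 0"
    and hc: "continuous_on (ball u0 \<epsilon> \<inter> {0..1}) h" and hm: "strict_mono_on (ball u0 \<epsilon> \<inter> {0..1}) h"
    and hg: "\<And>w. w \<in> ball u0 \<epsilon> \<inter> {0..1} \<Longrightarrow> h w \<in> {p..q} \<and> g w = \<gamma> (h w)"
    and u: "u \<in> ball u0 \<epsilon> \<inter> {0..1}" "0 < u" and v: "v \<in> ball u0 \<epsilon> \<inter> {0..1}" "0 < v"
    and G: "Good g u"
  shows "Good g v"
proof -
  define J where "J = ball u0 \<epsilon> \<inter> {0..1}"
  have Jconv: "x \<in> J" if "a \<in> J" "b \<in> J" "a \<le> x" "x \<le> b" for a b x
    using that by (auto simp: J_def dist_real_def)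
  obtain \<delta> t0 T \<phi> where r\<delta>: "regular_curve \<delta> t0 T" and \<phi>c: "continuous_on {t0..T} \<phi>"
    and \<phi>m: "strict_mono_on {t0..T} \<phi>" and \<phi>0: "\<phi> t0 = 0" and \<phi>T: "\<phi> T = u"
    and \<delta>g: "\<And>t. t\<in>{t0..T} \<Longrightarrow> \<delta> t = g (\<phi> t)"
    using G unfolding Good_def by blast
  have tT: "t0 < T" using r\<delta> by (simp add: regular_curve_def)
  have \<phi>mono: "\<phi> x \<le> \<phi> y" if "x \<in> {t0..T}" "y \<in> {t0..T}" "x \<le> y" for x y
    using \<phi>m[unfolded strict_mono_on_def, rule_format, of x y] that by (cases "x = y") auto
  have \<phi>range: "\<phi> t \<in> {0..u}" if "t \<in> {t0..T}" for t
    using \<phi>mono[of t0 t] \<phi>mono[of t T] that \<phi>0 \<phi>T tT by auto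
  show ?thesis
  proof (cases "v \<le> u")
    case True
    obtain tv where tv: "t0 \<le> tv" "tv \<le> T" "\<phi> tv = v"
      using IVT'[of \<phi> t0 v T, OF _ _ _ \<phi>c] \<phi>0 \<phi>T True v tT by auto
    have "tv \<noteq> t0" using tv \<phi>0 v by auto
    then have tv0: "t0 < tv" using tv by simp
    have "regular_curve \<delta> t0 tv" using regular_restrict[OF r\<delta> order.refl tv0 tv(2)] .
    moreover have "continuous_on {t0..tv} \<phi>" by (rule continuous_on_subset[OF \<phi>c]) (use tv in auto)
    moreover have "strict_mono_on {t0..tv} \<phi>" by (rule monotone_on_subset[OF \<phi>m]) (use tv in auto)
    ultimately show ?thesis unfolding Good_def using \<phi>0 tv \<delta>g by (intro exI[of _ \<delta>] exI[of _ t0] exI[of _ tv] exI[of _ \<phi>]) auto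
  next
    case False
    then have uv: "u < v" by simp
    have uJ: "u \<in> J" and vJ: "v \<in> J" using u v by (auto simp: J_def)
    have hmono: "h x < h y" if "x \<in> J" "y \<in> J" "x < y" for x y
      using hm that by (auto simp: J_def strict_mono_on_def)
    have hle: "h x \<le> h y" if "x \<in> J" "y \<in> J" "x \<le> y" for x y
      using hmono[OF that(1,2)] that by (cases "x = y") auto
    define e where "e = \<epsilon> - dist u u0"
    have e: "e > 0" using u by (auto simp: e_def dist_commute)
    obtain d where d: "d > 0" "\<And>t. t \<in> {t0..T} \<Longrightarrow> dist t T < d \<Longrightarrow> dist (\<phi> t) (\<phi> T) < e"
      using \<phi>c e tT unfolding continuous_on_iff by (metis atLeastAtMost_iff order.refl less_imp_le)
    define lo where "lo = max t0 (T - d)"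
    define N where "N = {lo<..<T}"
    define t1 where "t1 = (lo + T) / 2"
    have lo: "t0 \<le> lo" "lo < T" using tT d by (auto simp: lo_def)
    have t1: "t1 \<in> N" "t0 < t1" "t1 < T" using lo by (auto simp: t1_def N_def)
    have NT: "N \<subseteq> {t0<..<T}" using lo by (auto simp: N_def)
    have \<phi>N: "\<phi> t \<in> J" "0 < \<phi> t" if "t \<in> N" for t
    proof -
      have t: "t \<in> {t0..T}" "dist t T < d" using that lo by (auto simp: N_def lo_def dist_real_def)
      have "dist (\<phi> t) u < e" using d(2)[OF t] \<phi>T by simp
      then have "dist (\<phi> t) u0 < \<epsilon>" using dist_triangle[of "\<phi> t" u0 u] by (simp add: e_def dist_commute)
      moreover have "\<phi> t \<in> {0..u}" using \<phi>range t by blast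
      ultimately show "\<phi> t \<in> J" using uJ by (auto simp: J_def dist_commute)
      have "t0 < t" using that lo by (auto simp: N_def)
      then show "0 < \<phi> t" using \<phi>m[unfolded strict_mono_on_def, rule_format, of t0 t] t \<phi>0 tT by auto
    qed
    define k where "k = (\<lambda>t. h (\<phi> t))"
    have kc: "continuous_on N k" unfolding k_def
      by (rule continuous_on_compose2[OF hc[folded J_def] continuous_on_subset[OF \<phi>c]]) (use NT \<phi>N in auto)
    have km: "strict_mono_on N k"
      unfolding k_def strict_mono_on_def
    proof (intro allI impI)
      fix r s assume rs: "r \<in> N \<and> s \<in> N \<and> r < s"
      then have "\<phi> r < \<phi> s" using \<phi>m[unfolded strict_mono_on_def, rule_format, of r s] NT rs by (force simp: subset_iff)
      then show "h (\<phi> r) < h (\<phi> s)" using hmono \<phi>N rs by blast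
    qed
    have kin: "k t \<in> {p<..<q}" if t: "t \<in> N" for t
    proof -
      define w where "w = (max 0 (u0 - \<epsilon>) + \<phi> t) / 2"
      have pt: "\<phi> t \<in> J" "0 < \<phi> t" using \<phi>N t by auto
      then have "u0 - \<epsilon> < \<phi> t" by (auto simp: J_def dist_real_def)
      then have w: "w < \<phi> t" "0 \<le> w" "u0 - \<epsilon> < w" using pt by (auto simp: w_def)
      have wJ: "w \<in> J" using w pt by (auto simp: J_def dist_real_def)
      have "p \<le> h w" using hg wJ by (auto simp: J_def)
      also have "h w < h (\<phi> t)" using hmono wJ pt w by blast
      finally have 1: "p < k t" by (simp add: k_def)
      have "\<phi> t \<le> u" using \<phi>range t NT by force
      then have "h (\<phi> t) < h v" using hmono pt vJ uv by force
      also have "h v \<le> q" using hg vJ by (auto simp: J_def)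
      finally show ?thesis using 1 by (simp add: k_def)
    qed
    have keq: "\<delta> t = \<gamma> (k t)" if "t \<in> N" for t
      using \<delta>g[of t] hg[of "\<phi> t"] \<phi>N[OF that] that NT by (auto simp: k_def J_def)
    have oN: "open N" by (simp add: N_def)
    define a1 where "a1 = \<phi> t1"
    have a1: "a1 \<in> J" "0 < a1" "a1 \<le> u" using \<phi>N[OF t1(1)] \<phi>range[of t1] t1 by (auto simp: a1_def)
    have ks: "k t1 < h v" "h v \<le> q"
      using hmono[OF a1(1) vJ] a1 uv hg[OF vJ[unfolded J_def]] by (auto simp: k_def a1_def)
    obtain T' E where H: "t1 < T' \<and> continuous_on {t1..T'} E \<and> strict_mono_on {t1..T'} E \<and> E t1 = k t1 \<and> E T' = h v
     \<and> (\<forall>t\<in>{t1..T'}. E t \<in> {k t1..h v}) \<and> continuous_on {t0..T'} (\<lambda>t. if t \<le> t1 then \<delta> t else \<gamma> (E t))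
     \<and> reg_data (\<lambda>t. if t \<le> t1 then \<delta> t else \<gamma> (E t)) t0 T'"
    proof -
      have "\<exists>T' E. t1 < T' \<and> continuous_on {t1..T'} E \<and> strict_mono_on {t1..T'} E \<and> E t1 = k t1 \<and> E T' = h v
     \<and> (\<forall>t\<in>{t1..T'}. E t \<in> {k t1..h v}) \<and> continuous_on {t0..T'} (\<lambda>t. if t \<le> t1 then \<delta> t else \<gamma> (E t))
     \<and> reg_data (\<lambda>t. if t \<le> t1 then \<delta> t else \<gamma> (E t)) t0 T'"
        by (rule glue[OF r\<delta> t1(2,3) r\<gamma> oN t1(1) NT kc kin keq km ks]; simp)
      then show ?thesis by (elim exE) (rule that)
    qed
    then have T'1: "t1 < T'" and Ec: "continuous_on {t1..T'} E" and Em: "strict_mono_on {t1..T'} E"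
      and E0: "E t1 = k t1" and ET: "E T' = h v" and Er: "\<forall>t\<in>{t1..T'}. E t \<in> {k t1..h v}"
      and Fc: "continuous_on {t0..T'} (\<lambda>t. if t \<le> t1 then \<delta> t else \<gamma> (E t))"
      and Fr: "reg_data (\<lambda>t. if t \<le> t1 then \<delta> t else \<gamma> (E t)) t0 T'"
      by auto
    define I where "I = {a1..v}"
    have IJ: "I \<subseteq> J"
    proof
      fix x assume "x \<in> I" then show "x \<in> J" using Jconv[OF a1(1) vJ, of x] by (simp add: I_def)
    qed
    have hI: "inj_on h I"
    proof (rule inj_onI)
      fix x y assume xy: "x \<in> I" "y \<in> I" "h x = h y"
      have xJ: "x \<in> J" "y \<in> J" using xy IJ by auto
      show "x = y"
      proof (rule ccontr)
        assume "x \<noteq> y"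
        then consider "x < y" | "y < x" by linarith
        then show False
        proof cases
          case 1 then show False using hmono[OF xJ 1] xy by simp
        next
          case 2 then show False using hmono[OF xJ(2,1) 2] xy by simp
        qed
      qed
    qed
    define hinv where "hinv = inv_into I h"
    have hIc: "continuous_on I h" by (rule continuous_on_subset[OF hc[folded J_def] IJ])
    have hinvh: "hinv (h x) = x" if "x \<in> I" for x using inv_into_f_f[OF hI that] by (simp add: hinv_def)
    have hic: "continuous_on (h ` I) hinv"
      using continuous_on_inv[of I h hinv] hIc hinvh by (simp add: I_def)
    have aI: "a1 \<le> v" using a1 uv by simp
    have onto: "y \<in> h ` I" if hy: "h a1 \<le> y" "y \<le> h v" for y
    proof -
      obtain x where "a1 \<le> x" "x \<le> v" "h x = y"
        using IVT'[of h a1 y v, OF hy aI] hIc by (auto simp: I_def)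
      then show ?thesis by (auto simp: I_def)
    qed
    have kt1: "k t1 = h a1" by (simp add: k_def a1_def)
    have Eimg: "E t \<in> h ` I" if "t \<in> {t1..T'}" for t
    proof -
      have "E t \<in> {k t1..h v}" using Er that by blast
      then show ?thesis using onto[of "E t"] kt1 by simp
    qed
    have hinvI: "hinv y \<in> I" "h (hinv y) = y" if "y \<in> h ` I" for y
      using that unfolding hinv_def by (auto simp: inv_into_into f_inv_into_f)
    have hinvmono: "hinv y1 < hinv y2" if y: "y1 \<in> h ` I" "y2 \<in> h ` I" "y1 < y2" for y1 y2
    proof (rule ccontr)
      assume "\<not> hinv y1 < hinv y2"
      then have le: "hinv y2 \<le> hinv y1" by simp
      have "hinv y1 \<in> J" "hinv y2 \<in> J" using hinvI(1)[OF y(1)] hinvI(1)[OF y(2)] IJ by auto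
      then have "h (hinv y2) \<le> h (hinv y1)" using hle le by blast
      then show False using hinvI(2)[OF y(1)] hinvI(2)[OF y(2)] y(3) by simp
    qed
    define \<psi> where "\<psi> = (\<lambda>t. if t \<le> t1 then \<phi> t else hinv (E t))"
    define F where "F = (\<lambda>t. if t \<le> t1 then \<delta> t else \<gamma> (E t))"
    have a1I: "a1 \<in> I" using a1 uv by (auto simp: I_def)
    have \<psi>t1: "hinv (E t1) = \<phi> t1" using E0 kt1 hinvh[OF a1I] by (simp add: a1_def)
    have \<psi>c: "continuous_on {t0..T'} \<psi>"
    proof -
      have c1: "continuous_on {t0..t1} \<phi>" by (rule continuous_on_subset[OF \<phi>c]) (use t1 in auto)
      have c2: "continuous_on {t1..T'} (\<lambda>t. hinv (E t))"
        by (rule continuous_on_compose2[OF hic Ec]) (use Eimg in auto)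
      have "continuous_on ({t0..t1} \<union> {t1..T'}) \<psi>"
        unfolding \<psi>_def by (rule continuous_on_cases[OF _ _ c1 c2]) (use \<psi>t1 in auto)
      moreover have "{t0..t1} \<union> {t1..T'} = {t0..T'}" using t1 T'1 by auto
      ultimately show ?thesis by simp
    qed
    have \<psi>range: "\<psi> t \<in> {0..1}" if "t \<in> {t0..T'}" for t
    proof (cases "t \<le> t1")
      case True then show ?thesis using \<phi>range[of t] that t1 a1 u by (auto simp: \<psi>_def J_def)
    next
      case False
      then have "hinv (E t) \<in> I" using hinvI Eimg that by auto
      then show ?thesis using False IJ by (auto simp: \<psi>_def J_def)
    qed
    have \<psi>m: "strict_mono_on {t0..T'} \<psi>"
      unfolding strict_mono_on_def
    proof (intro allI impI)
      fix x y assume xy: "x \<in> {t0..T'} \<and> y \<in> {t0..T'} \<and> x < y"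
      show "\<psi> x < \<psi> y"
      proof (cases "y \<le> t1")
        case True then show ?thesis using xy \<phi>m t1 by (auto simp: \<psi>_def strict_mono_on_def)
      next
        case False
        have Ey: "E t1 < E y" using Em False xy T'1 by (auto simp: strict_mono_on_def)
        show ?thesis
        proof (cases "x \<le> t1")
          case True
          have "\<phi> x \<le> \<phi> t1" using \<phi>mono[of x t1] True xy t1 by auto
          also have "\<phi> t1 = hinv (E t1)" using \<psi>t1 by simp
          also have "hinv (E t1) < hinv (E y)"
            using hinvmono Eimg Ey False xy T'1 by (metis atLeastAtMost_iff less_imp_le order.refl not_le)
          finally show ?thesis using True False by (simp add: \<psi>_def)
        next
          case x: False
          have "E x < E y" using Em x xy by (auto simp: strict_mono_on_def)
          then have "hinv (E x) < hinv (E y)"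
            using hinvmono Eimg x False xy by (metis atLeastAtMost_iff less_imp_le not_le)
          then show ?thesis using x False by (simp add: \<psi>_def)
        qed
      qed
    qed
    have Fg: "F t = g (\<psi> t)" if "t \<in> {t0..T'}" for t
    proof (cases "t \<le> t1")
      case True then show ?thesis using \<delta>g[of t] that t1 by (auto simp: F_def \<psi>_def)
    next
      case False
      then have "E t \<in> h ` I" using Eimg that by auto
      then have "hinv (E t) \<in> J" "h (hinv (E t)) = E t" using hinvI IJ by auto
      then have "g (hinv (E t)) = \<gamma> (E t)" using hg[of "hinv (E t)"] by (auto simp: J_def)
      then show ?thesis using False by (simp add: F_def \<psi>_def)
    qed
    have "regular_curve F t0 T'"
      unfolding regular_curve_iff
    proof (intro conjI ballI impI)
      show "t0 < T'" using t1 T'1 by simp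
      show "continuous_on {t0..T'} F" using Fc by (simp add: F_def)
      show "reg_data F t0 T'" using Fr by (simp add: F_def)
      fix x y assume xy: "x \<in> {t0..T'}" "y \<in> {t0..T'}" "x < y \<and> (x, y) \<noteq> (t0, T')"
      then have "\<psi> x < \<psi> y" using \<psi>m by (auto simp: strict_mono_on_def)
      moreover have "\<psi> x \<in> {0..1}" "\<psi> y \<in> {0..1}" using \<psi>range xy by blast+
      ultimately have "g (\<psi> x) \<noteq> g (\<psi> y)" using gi by (metis inj_on_eq_iff less_irrefl)
      then show "F x \<noteq> F y" using Fg xy by simp
    qed
    moreover have "\<psi> t0 = 0" using \<phi>0 t1 by (simp add: \<psi>_def)
    moreover have "\<psi> T' = v" using T'1 ET hinvh[of v] aI by (simp add: \<psi>_def I_def)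
    ultimately show ?thesis unfolding Good_def using \<psi>c \<psi>m Fg
      by (intro exI[of _ F] exI[of _ t0] exI[of _ T'] exI[of _ \<psi>]) auto
  qed
qed


lemma base_good:
  fixes g \<gamma> :: "real \<Rightarrow> real^2"
  assumes r\<gamma>: "regular_curve \<gamma> p q" and \<epsilon>: "\<epsilon> > 0"
    and hc: "continuous_on (ball 0 \<epsilon> \<inter> {0..1}) h" and hm: "strict_mono_on (ball 0 \<epsilon> \<inter> {0..1}) h"
    and hg: "\<And>w. w \<in> ball 0 \<epsilon> \<inter> {0..1} \<Longrightarrow> h w \<in> {p..q} \<and> g w = \<gamma> (h w)"
  shows "\<exists>u0. 0 < u0 \<and> u0 \<le> 1 \<and> Good g u0"
proof -
  define u0 where "u0 = min (\<epsilon>/2) (1/2)"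
  define J where "J = ball 0 \<epsilon> \<inter> {0..1::real}"
  have u0: "0 < u0" "u0 \<le> 1" "u0 < \<epsilon>" using \<epsilon> by (auto simp: u0_def)
  define I where "I = {0..u0}"
  have IJ: "I \<subseteq> J" using u0 by (auto simp: I_def J_def)
  have hmono: "h x < h y" if "x \<in> J" "y \<in> J" "x < y" for x y
    using hm that by (auto simp: J_def strict_mono_on_def)
  have hle: "h x \<le> h y" if "x \<in> J" "y \<in> J" "x \<le> y" for x y
    using hmono[OF that(1,2)] that by (cases "x = y") auto
  have 0: "0 \<in> J" "u0 \<in> J" using u0 \<epsilon> by (auto simp: J_def)
  have hI: "inj_on h I"
  proof (rule inj_onI)
    fix x y assume xy: "x \<in> I" "y \<in> I" "h x = h y"
    have xJ: "x \<in> J" "y \<in> J" using xy IJ by auto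
    show "x = y"
    proof (rule ccontr)
      assume "x \<noteq> y"
      then consider "x < y" | "y < x" by linarith
      then show False
      proof cases
        case 1 then show False using hmono[OF xJ 1] xy by simp
      next
        case 2 then show False using hmono[OF xJ(2,1) 2] xy by simp
      qed
    qed
  qed
  define hinv where "hinv = inv_into I h"
  have hIc: "continuous_on I h" by (rule continuous_on_subset[OF hc[folded J_def] IJ])
  have hinvh: "hinv (h x) = x" if "x \<in> I" for x using inv_into_f_f[OF hI that] by (simp add: hinv_def)
  have hic: "continuous_on (h ` I) hinv"
    using continuous_on_inv[of I h hinv] hIc hinvh by (simp add: I_def)
  have aI: "0 \<le> u0" using u0 by simp
  have onto: "y \<in> h ` I" if hy: "h 0 \<le> y" "y \<le> h u0" for y
  proof -
    obtain x where "0 \<le> x" "x \<le> u0" "h x = y"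
      using IVT'[of h 0 y u0, OF hy aI] hIc by (auto simp: I_def)
    then show ?thesis by (auto simp: I_def)
  qed
  have hinvI: "hinv y \<in> I" "h (hinv y) = y" if "y \<in> h ` I" for y
    using that unfolding hinv_def by (auto simp: inv_into_into f_inv_into_f)
  have hinvmono: "hinv y1 < hinv y2" if y: "y1 \<in> h ` I" "y2 \<in> h ` I" "y1 < y2" for y1 y2
  proof (rule ccontr)
    assume "\<not> hinv y1 < hinv y2"
    then have le: "hinv y2 \<le> hinv y1" by simp
    have "hinv y1 \<in> J" "hinv y2 \<in> J" using hinvI(1)[OF y(1)] hinvI(1)[OF y(2)] IJ by auto
    then have "h (hinv y2) \<le> h (hinv y1)" using hle le by blast
    then show False using hinvI(2)[OF y(1)] hinvI(2)[OF y(2)] y(3) by simp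
  qed
  have h0: "h 0 < h u0" using hmono[OF 0] u0 by simp
  have hp: "p \<le> h 0" "h u0 \<le> q" using hg 0 by (auto simp: J_def)
  have r: "regular_curve \<gamma> (h 0) (h u0)" by (rule regular_restrict[OF r\<gamma> hp(1) h0 hp(2)])
  have sub: "{h 0..h u0} \<subseteq> h ` I" using onto by auto
  have "continuous_on {h 0..h u0} hinv" by (rule continuous_on_subset[OF hic sub])
  moreover have "strict_mono_on {h 0..h u0} hinv"
    unfolding strict_mono_on_def using hinvmono sub by blast
  moreover have "hinv (h 0) = 0" "hinv (h u0) = u0" using hinvh u0 by (auto simp: I_def)
  moreover have "\<forall>t\<in>{h 0..h u0}. \<gamma> t = g (hinv t)"
  proof
    fix t assume t: "t \<in> {h 0..h u0}"
    then have tI: "t \<in> h ` I" using sub by blast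
    have "hinv t \<in> J" "h (hinv t) = t" using hinvI[OF tI] IJ by auto
    then show "\<gamma> t = g (hinv t)" using hg[of "hinv t"] by (auto simp: J_def)
  qed
  ultimately have "Good g u0" unfolding Good_def using r
    by (intro exI[of _ \<gamma>] exI[of _ "h 0"] exI[of _ "h u0"] exI[of _ hinv]) auto
  then show ?thesis using u0 by blast
qed

theorem lemma5p1:
  fixes L :: "(real^2) set" and S Q :: "real^2"
  assumes "connected L"
    and "\<forall>P\<in>L. \<exists>r>0. \<exists>\<gamma> a b. regular_curve \<gamma> a b \<and>
            (ball P r \<inter> L = \<gamma> ` {a..b} \<or> ball P r \<inter> L = \<gamma> ` {a<..<b})"
    and "S \<in> L" and "Q \<in> L" and "S \<noteq> Q"
  shows "\<exists>\<gamma> a b. regular_curve \<gamma> a b \<and> \<gamma> ` {a..b} \<subseteq> L \<and> \<gamma> a = S \<and> \<gamma> b = Q"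
proof (cases "\<exists>P\<in>L. \<exists>r>0. \<exists>\<gamma> a b. regular_curve \<gamma> a b \<and> ball P r \<inter> L = \<gamma> ` {a..b} \<and> \<gamma> a = \<gamma> b")
  case True
  then obtain P r \<gamma> a b where P: "P \<in> L" "r > 0" and r\<gamma>: "regular_curve \<gamma> a b"
    and img: "ball P r \<inter> L = \<gamma> ` {a..b}" and ab: "\<gamma> a = \<gamma> b" by blast
  have op: "openin (top_of_set L) (\<gamma> ` {a..b})"
    using openin_open_Int[of "ball P r" L] img by (simp add: Int_commute)
  have "compact (\<gamma> ` {a..b})"
    using r\<gamma> by (intro compact_continuous_image compact_Icc) (simp add: regular_curve_def)
  then have "closed (\<gamma> ` {a..b})" by (rule compact_imp_closed)
  moreover have "\<gamma> ` {a..b} \<subseteq> L" using img by blast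
  ultimately have cl: "closedin (top_of_set L) (\<gamma> ` {a..b})"
    unfolding closedin_closed by (intro exI[of _ "\<gamma> ` {a..b}"]) auto
  have ne: "\<gamma> ` {a..b} \<noteq> {}" using img P by (metis IntI centre_in_ball empty_iff)
  have CL: "\<gamma> ` {a..b} = L"
    using assms(1) op cl ne unfolding connected_clopen by blast
  obtain \<delta> a' b' where "regular_curve \<delta> a' b'" "\<delta> ` {a'..b'} \<subseteq> \<gamma> ` {a..b}" "\<delta> a' = S" "\<delta> b' = Q"
    using loop_case[OF r\<gamma> ab _ _ assms(5)] assms(3,4) CL by blast
  then show ?thesis using CL by blast
next
  case False
  have NL: "\<forall>P\<in>L. \<exists>r>0. \<exists>\<gamma> a b. regular_curve \<gamma> a b \<and>
            ((ball P r \<inter> L = \<gamma> ` {a..b} \<and> \<gamma> a \<noteq> \<gamma> b) \<or> ball P r \<inter> L = \<gamma> ` {a<..<b})"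
  proof
    fix P assume P: "P \<in> L"
    obtain r \<gamma> a b where r: "r > 0" "regular_curve \<gamma> a b"
      and img: "ball P r \<inter> L = \<gamma> ` {a..b} \<or> ball P r \<inter> L = \<gamma> ` {a<..<b}"
      using bspec[OF assms(2) P] by blast
    have "(ball P r \<inter> L = \<gamma> ` {a..b} \<and> \<gamma> a \<noteq> \<gamma> b) \<or> ball P r \<inter> L = \<gamma> ` {a<..<b}"
      using img False P r by blast
    then show "\<exists>r>0. \<exists>\<gamma> a b. regular_curve \<gamma> a b \<and>
            ((ball P r \<inter> L = \<gamma> ` {a..b} \<and> \<gamma> a \<noteq> \<gamma> b) \<or> ball P r \<inter> L = \<gamma> ` {a<..<b})"
      using r by blast
  qed
  have "path_component L S Q" by (rule path_conn[OF assms(1,2,3,4)])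
  then obtain p0 where p0: "path p0" "path_image p0 \<subseteq> L" "pathstart p0 = S" "pathfinish p0 = Q"
    unfolding path_component_def by blast
  obtain g where g: "arc g" "path_image g \<subseteq> path_image p0" "pathstart g = S" "pathfinish g = Q"
    using path_contains_arc[OF p0(1,3,4) assms(5)] by blast
  have gL: "path_image g \<subseteq> L" using g p0 by blast
  have gi: "inj_on g {0..1}" using g by (simp add: arc_def)
  obtain \<gamma>0 p0' q0 \<epsilon>0 h0 where ld0: "regular_curve \<gamma>0 p0' q0" "\<epsilon>0 > 0" "continuous_on (ball 0 \<epsilon>0 \<inter> {0..1}) h0"
    "strict_mono_on (ball 0 \<epsilon>0 \<inter> {0..1}) h0" "\<forall>w\<in>ball 0 \<epsilon>0 \<inter> {0..1}. h0 w \<in> {p0'..q0} \<and> g w = \<gamma>0 (h0 w)"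
    using local_data[OF g(1) gL NL, of 0] by auto
  obtain u0 where u0: "0 < u0" "u0 \<le> 1" "Good g u0"
    using base_good[OF ld0(1,2,3,4)] ld0(5) by blast
  have "Good g 1"
  proof (rule connected_induction_simple[of "{0<..1::real}" u0 1 "Good g"])
    show "connected {0<..1::real}" by (simp add: is_interval_connected)
    show "u0 \<in> {0<..1}" "1 \<in> {0<..1::real}" using u0 by auto
    show "Good g u0" using u0 by simp
    fix a :: real assume a: "a \<in> {0<..1}"
    obtain \<gamma> p q \<epsilon> h where ld: "regular_curve \<gamma> p q" "\<epsilon> > 0" "continuous_on (ball a \<epsilon> \<inter> {0..1}) h"
      "strict_mono_on (ball a \<epsilon> \<inter> {0..1}) h" "\<forall>w\<in>ball a \<epsilon> \<inter> {0..1}. h w \<in> {p..q} \<and> g w = \<gamma> (h w)"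
      using local_data[OF g(1) gL NL, of a] a by auto
    show "\<exists>T. openin (top_of_set {0<..1}) T \<and> a \<in> T \<and> (\<forall>x\<in>T. \<forall>y\<in>T. Good g x \<longrightarrow> Good g y)"
    proof (intro exI conjI ballI impI)
      show "openin (top_of_set {0<..1}) (ball a \<epsilon> \<inter> {0<..1})"
        using openin_open_Int[of "ball a \<epsilon>" "{0<..1::real}"] by (simp add: Int_commute)
      show "a \<in> ball a \<epsilon> \<inter> {0<..1}" using a ld(2) by auto
      fix x y assume xy: "x \<in> ball a \<epsilon> \<inter> {0<..1}" "y \<in> ball a \<epsilon> \<inter> {0<..1}" and Gx: "Good g x"
      show "Good g y"
        by (rule step[OF gi ld(1,2,3,4) _ _ _ _ _ Gx]) (use ld(5) xy in auto)
    qed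
  qed
  then obtain \<delta> t0 T \<phi> where r\<delta>: "regular_curve \<delta> t0 T" and \<phi>m: "strict_mono_on {t0..T} \<phi>"
    and \<phi>0: "\<phi> t0 = 0" and \<phi>T: "\<phi> T = 1" and \<delta>g: "\<forall>t\<in>{t0..T}. \<delta> t = g (\<phi> t)"
    unfolding Good_def by blast
  have tT: "t0 < T" using r\<delta> by (simp add: regular_curve_def)
  have \<phi>r: "\<phi> t \<in> {0..1}" if "t \<in> {t0..T}" for t
  proof -
    have "\<phi> t0 \<le> \<phi> t" using \<phi>m[unfolded strict_mono_on_def, rule_format, of t0 t] that tT by (cases "t = t0") auto
    moreover have "\<phi> t \<le> \<phi> T" using \<phi>m[unfolded strict_mono_on_def, rule_format, of t T] that tT by (cases "t = T") auto
    ultimately show ?thesis using \<phi>0 \<phi>T by auto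
  qed
  have "\<delta> ` {t0..T} \<subseteq> L"
  proof
    fix x assume "x \<in> \<delta> ` {t0..T}"
    then obtain t where t: "t \<in> {t0..T}" "x = \<delta> t" by auto
    then have "x = g (\<phi> t)" using \<delta>g by auto
    then show "x \<in> L" using gL \<phi>r[OF t(1)] by (auto simp: path_image_def)
  qed
  moreover have "\<delta> t0 = S" "\<delta> T = Q" using \<delta>g \<phi>0 \<phi>T tT g(3,4) by (auto simp: pathstart_def pathfinish_def)
  ultimately show ?thesis using r\<delta> by blast
qed


end
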